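(* The set $M = \{z = 0,\ p_z = 0,\ p_\theta = 0\}$ (with $p_\theta = x p_y - y p_x$) is invariant under the Hamiltonian flow of the Kepler–Heisenberg Hamiltonian $H$. Along any solution in $M$ with energy $h$, the function $r(t) = \sqrt{x(t)^2+y(t)^2}$ satisfies that the graph $\{(t, r(t))\}$ lies on a conic in the $(t,r)$-plane which is a hyperbola if $h>0$, an ellipse if $h<0$, and a parabola if $h=0$.
   Context: Phase space is $T^*\mathbb R^3$ with coordinates $(x,y,z,p_x,p_y,p_z)$. Set $P_X = p_x - \tfrac12 y p_z$, $P_Y = p_y + \tfrac12 x p_z$. The Kepler–Heisenberg Hamiltonian is $H = \tfrac12(P_X^2 + P_Y^2) - \frac{1}{8\pi\sqrt{(x^2+y^2)^2+16z^2}}$, defined away from $x=y=z=0$. *)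

theory Defs
  imports "HOL-Analysis.Analysis"
begin

definition KH :: "real^3 \<Rightarrow> real^3 \<Rightarrow> real" where
  "KH q p =
     (let x = q$1; y = q$2; z = q$3; px = p$1; py = p$2; pz = p$3;
          PX = px - y * pz / 2; PY = py + x * pz / 2
      in (PX^2 + PY^2) / 2 - 1 / (8 * pi * sqrt ((x^2 + y^2)^2 + 16 * z^2)))"

text \<open>(q,p) is a solution of Hamilton's equations q' = dH/dp, p' = - dH/dq on the set I.\<close>
definition hamiltonian_solution ::
  "(real^3 \<Rightarrow> real^3 \<Rightarrow> real) \<Rightarrow> real set \<Rightarrow> (real \<Rightarrow> real^3) \<Rightarrow> (real \<Rightarrow> real^3) \<Rightarrow> bool" where
  "hamiltonian_solution H I q p \<longleftrightarrow>
     (\<forall>t\<in>I. \<exists>dq dp.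
        (q has_vector_derivative dq) (at t) \<and>
        (p has_vector_derivative dp) (at t) \<and>
        ((\<lambda>v. H (q t) v) has_derivative (\<lambda>v. dq \<bullet> v)) (at (p t)) \<and>
        ((\<lambda>u. H u (p t)) has_derivative (\<lambda>u. - (dp \<bullet> u))) (at (q t)))"

text \<open>Solution of the Kepler-Heisenberg flow on an open interval I, avoiding the singularity x=y=z=0.\<close>
definition KH_solution :: "real set \<Rightarrow> (real \<Rightarrow> real^3) \<Rightarrow> (real \<Rightarrow> real^3) \<Rightarrow> bool" where
  "KH_solution I q p \<longleftrightarrow> open I \<and> is_interval I \<and> I \<noteq> {} \<and>
     (\<forall>t\<in>I. q t \<noteq> 0) \<and> hamiltonian_solution KH I q p"

definition inM :: "real^3 \<Rightarrow> real^3 \<Rightarrow> bool" where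
  "inM q p \<longleftrightarrow> q$3 = 0 \<and> p$3 = 0 \<and> q$1 * p$2 - q$2 * p$1 = 0"

definition conic_set :: "real \<Rightarrow> real \<Rightarrow> real \<Rightarrow> real \<Rightarrow> real \<Rightarrow> real \<Rightarrow> (real \<times> real) set" where
  "conic_set A B C D E F = {(t, r). A * t^2 + B * t * r + C * r^2 + D * t + E * r + F = 0}"

text \<open>Determinant of the symmetric 3x3 matrix [[A,B/2,D/2],[B/2,C,E/2],[D/2,E/2,F]];
  the conic is non-degenerate iff it is non-zero.\<close>
definition conic_det :: "real \<Rightarrow> real \<Rightarrow> real \<Rightarrow> real \<Rightarrow> real \<Rightarrow> real \<Rightarrow> real" where
  "conic_det A B C D E F =
     A * (C * F - (E/2)^2) - (B/2) * ((B/2) * F - (E/2) * (D/2)) + (D/2) * ((B/2) * (E/2) - C * (D/2))"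

definition is_hyperbola :: "real \<Rightarrow> real \<Rightarrow> real \<Rightarrow> real \<Rightarrow> real \<Rightarrow> real \<Rightarrow> bool" where
  "is_hyperbola A B C D E F \<longleftrightarrow> conic_det A B C D E F \<noteq> 0 \<and> B^2 - 4 * A * C > 0"

definition is_parabola :: "real \<Rightarrow> real \<Rightarrow> real \<Rightarrow> real \<Rightarrow> real \<Rightarrow> real \<Rightarrow> bool" where
  "is_parabola A B C D E F \<longleftrightarrow> conic_det A B C D E F \<noteq> 0 \<and> B^2 - 4 * A * C = 0"

text \<open>Real (non-empty) non-degenerate ellipse.\<close>
definition is_ellipse :: "real \<Rightarrow> real \<Rightarrow> real \<Rightarrow> real \<Rightarrow> real \<Rightarrow> real \<Rightarrow> bool" where
  "is_ellipse A B C D E F \<longleftrightarrow> conic_det A B C D E F \<noteq> 0 \<and> B^2 - 4 * A * C < 0 \<and>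
     conic_set A B C D E F \<noteq> {}"

definition lies_on_hyperbola :: "(real \<times> real) set \<Rightarrow> bool" where
  "lies_on_hyperbola S \<longleftrightarrow> (\<exists>A B C D E F. is_hyperbola A B C D E F \<and> S \<subseteq> conic_set A B C D E F)"

definition lies_on_parabola :: "(real \<times> real) set \<Rightarrow> bool" where
  "lies_on_parabola S \<longleftrightarrow> (\<exists>A B C D E F. is_parabola A B C D E F \<and> S \<subseteq> conic_set A B C D E F)"

definition lies_on_ellipse :: "(real \<times> real) set \<Rightarrow> bool" where
  "lies_on_ellipse S \<longleftrightarrow> (\<exists>A B C D E F. is_ellipse A B C D E F \<and> S \<subseteq> conic_set A B C D E F)"

end

theory Submission imports Defs begin


lemma dir_deriv:
  fixes x d :: "real^3"
  assumes "(f has_derivative (\<lambda>v. d \<bullet> v)) (at x)"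
  shows "((\<lambda>s. f (x + s *\<^sub>R axis i 1)) has_real_derivative (d $ i)) (at 0)"
proof -
  have l: "((\<lambda>s::real. x + s *\<^sub>R axis i 1) has_derivative (\<lambda>s. s *\<^sub>R axis i 1)) (at 0)"
    by (auto intro!: derivative_eq_intros)
  have "((\<lambda>s. f (x + s *\<^sub>R axis i 1)) has_derivative (\<lambda>s. d \<bullet> (s *\<^sub>R axis i 1))) (at 0)"
    using has_derivative_compose[OF l, of f "\<lambda>v. d \<bullet> v"] assms by simp
  moreover have "(\<lambda>s. d \<bullet> (s *\<^sub>R axis i (1::real))) = (\<lambda>s. d $ i * s)"
    by (auto simp: inner_axis)
  ultimately show ?thesis by (simp add: has_field_derivative_def)
qed

lemma comp_deriv:
  fixes q :: "real \<Rightarrow> real^3"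
  assumes "(q has_vector_derivative dq) (at t)"
  shows "((\<lambda>t. q t $ i) has_real_derivative (dq $ i)) (at t)"
proof -
  have "bounded_linear (\<lambda>v::real^3. v $ i)" by (rule bounded_linear_vec_nth)
  from bounded_linear.has_vector_derivative[OF this assms] show ?thesis
    by (simp add: has_real_derivative_iff_has_vector_derivative)
qed



lemma ax: "(b + s *\<^sub>R axis (1::3) 1) $ 1 = b$1 + s" "(b + s *\<^sub>R axis (1::3) 1) $ 2 = b$2"
  "(b + s *\<^sub>R axis (1::3) 1) $ 3 = (b$3::real)"
  "(b + s *\<^sub>R axis (2::3) 1) $ 1 = b$1" "(b + s *\<^sub>R axis (2::3) 1) $ 2 = b$2 + s"
  "(b + s *\<^sub>R axis (2::3) 1) $ 3 = (b$3::real)"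
  "(b + s *\<^sub>R axis (3::3) 1) $ 1 = b$1" "(b + s *\<^sub>R axis (3::3) 1) $ 2 = b$2"
  "(b + s *\<^sub>R axis (3::3) 1) $ 3 = (b$3::real) + s"
  by (auto simp: axis_def)

definition "Sf (a::real^3) = (a$1^2+a$2^2)^2 + 16*a$3^2"

lemma q1: assumes "Sf a > 0"
  shows "((\<lambda>s. KH (a + s *\<^sub>R axis 1 1) b) has_real_derivative
     ((b$2 + a$1*b$3/2)*b$3/2 + a$1*(a$1^2+a$2^2)/(4*pi* sqrt (Sf a)^3))) (at 0)"
proof -
  have e: "(\<lambda>s. KH (a + s *\<^sub>R axis 1 1) b) = (\<lambda>s. ((b$1 - a$2*b$3/2)^2 + (b$2 + (a$1+s)*b$3/2)^2)/2
     - 1/(8*pi* sqrt (((a$1+s)^2+a$2^2)^2+16*a$3^2)))"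
    by (simp add: KH_def axis_def Let_def)
  have p: "sqrt (Sf a) > 0" using assms by simp
  have c: "sqrt (Sf a) ^ 3 = Sf a * sqrt (Sf a)" using assms
    by (simp add: power3_eq_cube)
  show ?thesis unfolding e c
    using assms p unfolding Sf_def
    apply (auto intro!: derivative_eq_intros)
    apply (simp add: field_simps)
    done
qed

lemma p1:
  shows "((\<lambda>s. KH a (b + s *\<^sub>R axis 1 1)) has_real_derivative (b$1 - a$2*b$3/2)) (at 0)"
proof -
  have e: "(\<lambda>s. KH a (b + s *\<^sub>R axis 1 1)) = (\<lambda>s. ((b$1+s - a$2*b$3/2)^2 + (b$2 + a$1*b$3/2)^2)/2 - 1/(8*pi* sqrt ((a$1^2+a$2^2)^2+16*a$3^2)))"
    by (simp add: KH_def axis_def Let_def)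
  show ?thesis unfolding e
    by (auto intro!: derivative_eq_intros) (simp_all add: field_simps)?
qed

lemma p2:
  shows "((\<lambda>s. KH a (b + s *\<^sub>R axis 2 1)) has_real_derivative (b$2 + a$1*b$3/2)) (at 0)"
proof -
  have e: "(\<lambda>s. KH a (b + s *\<^sub>R axis 2 1)) = (\<lambda>s. ((b$1 - a$2*b$3/2)^2 + (b$2+s + a$1*b$3/2)^2)/2 - 1/(8*pi* sqrt ((a$1^2+a$2^2)^2+16*a$3^2)))"
    by (simp add: KH_def axis_def Let_def)
  show ?thesis unfolding e
    by (auto intro!: derivative_eq_intros) (simp_all add: field_simps)?
qed

lemma p3:
  shows "((\<lambda>s. KH a (b + s *\<^sub>R axis 3 1)) has_real_derivative ((a$1*(b$2 + a$1*b$3/2) - a$2*(b$1 - a$2*b$3/2))/2)) (at 0)"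
proof -
  have e: "(\<lambda>s. KH a (b + s *\<^sub>R axis 3 1)) = (\<lambda>s. ((b$1 - a$2*(b$3+s)/2)^2 + (b$2 + a$1*(b$3+s)/2)^2)/2 - 1/(8*pi* sqrt ((a$1^2+a$2^2)^2+16*a$3^2)))"
    by (simp add: KH_def axis_def Let_def)
  show ?thesis unfolding e
    by (auto intro!: derivative_eq_intros) (simp_all add: field_simps)?
qed

lemma q2: assumes "Sf a > 0"
  shows "((\<lambda>s. KH (a + s *\<^sub>R axis 2 1) b) has_real_derivative (-(b$1 - a$2*b$3/2)*b$3/2 + a$2*(a$1^2+a$2^2)/(4*pi* sqrt (Sf a)^3))) (at 0)"
proof -
  have e: "(\<lambda>s. KH (a + s *\<^sub>R axis 2 1) b) = (\<lambda>s. ((b$1 - (a$2+s)*b$3/2)^2 + (b$2 + a$1*b$3/2)^2)/2 - 1/(8*pi* sqrt ((a$1^2+(a$2+s)^2)^2+16*a$3^2)))"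
    by (simp add: KH_def axis_def Let_def)
  have p: "sqrt (Sf a) > 0" using assms by simp
  have c: "sqrt (Sf a) ^ 3 = Sf a * sqrt (Sf a)" using assms
    by (simp add: power3_eq_cube)
  show ?thesis unfolding e c
    using assms p unfolding Sf_def
    apply (auto intro!: derivative_eq_intros)
    apply (simp add: field_simps)
    done
qed

lemma q3: assumes "Sf a > 0"
  shows "((\<lambda>s. KH (a + s *\<^sub>R axis 3 1) b) has_real_derivative (2*a$3/(pi* sqrt (Sf a)^3))) (at 0)"
proof -
  have e: "(\<lambda>s. KH (a + s *\<^sub>R axis 3 1) b) = (\<lambda>s. ((b$1 - a$2*b$3/2)^2 + (b$2 + a$1*b$3/2)^2)/2 - 1/(8*pi* sqrt ((a$1^2+a$2^2)^2+16*(a$3+s)^2)))"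
    by (simp add: KH_def axis_def Let_def)
  have p: "sqrt (Sf a) > 0" using assms by simp
  have c: "sqrt (Sf a) ^ 3 = Sf a * sqrt (Sf a)" using assms
    by (simp add: power3_eq_cube)
  show ?thesis unfolding e c
    using assms p unfolding Sf_def
    apply (auto intro!: derivative_eq_intros)
    apply (simp add: field_simps)
    done
qed

lemma Sf_pos: "a \<noteq> 0 \<Longrightarrow> Sf a > 0"
proof -
  assume a: "a \<noteq> 0"
  have "Sf a \<ge> 0" unfolding Sf_def by simp
  moreover have "Sf a \<noteq> 0"
  proof
    assume "Sf a = 0"
    hence "(a$1^2+a$2^2)^2 = 0 \<and> a$3^2 = 0" unfolding Sf_def
      by (smt (verit) zero_le_power2)
    hence "a$1 = 0 \<and> a$2 = 0 \<and> a$3 = 0"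
      by (smt (verit) power_eq_0_iff zero_le_power2)
    hence "a = 0" by (simp add: vec_eq_iff forall_3)
    with a show False by simp
  qed
  ultimately show ?thesis by simp
qed

definition "dH1 (a::real^3) (b::real^3) = b$1 - a$2*b$3/2"
definition "dH2 (a::real^3) (b::real^3) = b$2 + a$1*b$3/2"
definition "dH3 a b = (a$1 * dH2 a b - a$2 * dH1 a b)/2"
definition "dQ1 a b = dH2 a b * b$3/2 + a$1*(a$1^2+a$2^2)/(4*pi* sqrt (Sf a)^3)"
definition "dQ2 a b = -dH1 a b * b$3/2 + a$2*(a$1^2+a$2^2)/(4*pi* sqrt (Sf a)^3)"
definition "dQ3 a = 2*a$3/(pi* sqrt (Sf a)^3)"

lemma ode:
  assumes "KH_solution I q p" "t \<in> I"
  shows "((\<lambda>t. q t $ 1) has_real_derivative dH1 (q t) (p t)) (at t)"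
    "((\<lambda>t. q t $ 2) has_real_derivative dH2 (q t) (p t)) (at t)"
    "((\<lambda>t. q t $ 3) has_real_derivative dH3 (q t) (p t)) (at t)"
    "((\<lambda>t. p t $ 1) has_real_derivative - dQ1 (q t) (p t)) (at t)"
    "((\<lambda>t. p t $ 2) has_real_derivative - dQ2 (q t) (p t)) (at t)"
    "((\<lambda>t. p t $ 3) has_real_derivative - dQ3 (q t)) (at t)"
proof -
  from assms obtain dq dp where
    hq: "(q has_vector_derivative dq) (at t)" and
    hp: "(p has_vector_derivative dp) (at t)" and
    dP: "((\<lambda>v. KH (q t) v) has_derivative (\<lambda>v. dq \<bullet> v)) (at (p t))" and
    dQ: "((\<lambda>u. KH u (p t)) has_derivative (\<lambda>u. - (dp \<bullet> u))) (at (q t))"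
    unfolding KH_solution_def hamiltonian_solution_def by blast
  have dQ': "((\<lambda>u. KH u (p t)) has_derivative (\<lambda>u. (- dp) \<bullet> u)) (at (q t))"
    using dQ by simp
  have S: "Sf (q t) > 0" using assms Sf_pos unfolding KH_solution_def by blast
  have e1: "dq $ 1 = dH1 (q t) (p t)"
    using DERIV_unique[OF dir_deriv[OF dP, of 1] p1] by (simp add: dH1_def)
  have e2: "dq $ 2 = dH2 (q t) (p t)"
    using DERIV_unique[OF dir_deriv[OF dP, of 2] p2] by (simp add: dH2_def)
  have e3: "dq $ 3 = dH3 (q t) (p t)"
    using DERIV_unique[OF dir_deriv[OF dP, of 3] p3] by (simp add: dH3_def dH1_def dH2_def)
  have f1: "dp $ 1 = - dQ1 (q t) (p t)"
    using DERIV_unique[OF dir_deriv[OF dQ', of 1] q1[OF S]] by (simp add: dQ1_def dH2_def)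
  have f2: "dp $ 2 = - dQ2 (q t) (p t)"
    using DERIV_unique[OF dir_deriv[OF dQ', of 2] q2[OF S]] by (simp add: dQ2_def dH1_def)
  have f3: "dp $ 3 = - dQ3 (q t)"
    using DERIV_unique[OF dir_deriv[OF dQ', of 3] q3[OF S]] by (simp add: dQ3_def)
  show "((\<lambda>t. q t $ 1) has_real_derivative dH1 (q t) (p t)) (at t)"
    "((\<lambda>t. q t $ 2) has_real_derivative dH2 (q t) (p t)) (at t)"
    "((\<lambda>t. q t $ 3) has_real_derivative dH3 (q t) (p t)) (at t)"
    "((\<lambda>t. p t $ 1) has_real_derivative - dQ1 (q t) (p t)) (at t)"
    "((\<lambda>t. p t $ 2) has_real_derivative - dQ2 (q t) (p t)) (at t)"
    "((\<lambda>t. p t $ 3) has_real_derivative - dQ3 (q t)) (at t)"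
    using comp_deriv[OF hq] comp_deriv[OF hp] e1 e2 e3 f1 f2 f3 by metis+
qed



lemma const_deriv0:
  fixes f :: "real \<Rightarrow> real"
  assumes "is_interval I" "\<And>s. s \<in> I \<Longrightarrow> (f has_real_derivative 0) (at s)" "t0 \<in> I" "t \<in> I"
  shows "f t = f t0"
proof -
  have "convex I" using assms(1) by (simp add: is_interval_convex)
  then obtain c where "\<forall>x\<in>I. f x = c"
    using has_field_derivative_zero_constant[of I f] assms(2) has_field_derivative_at_within by blast
  thus ?thesis using assms by simp
qed

lemma gron:
  fixes E E' L :: "real \<Rightarrow> real"
  assumes I: "is_interval I" and t0: "t0 \<in> I" and t: "t \<in> I" and E0: "E t0 = 0"
    and pos: "\<And>s. s \<in> I \<Longrightarrow> E s \<ge> 0"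
    and der: "\<And>s. s \<in> I \<Longrightarrow> (E has_real_derivative E' s) (at s)"
    and bd: "\<And>s. s \<in> I \<Longrightarrow> \<bar>E' s\<bar> \<le> L s * E s"
    and L: "continuous_on I L"
  shows "E t = 0"
proof -
  define a where "a = min t t0"
  define b where "b = max t t0"
  have aI: "a \<in> I" "b \<in> I" "a \<le> b" using t t0 unfolding a_def b_def min_def max_def by simp_all
  have sub: "{a..b} \<subseteq> I"
  proof
    fix y assume "y \<in> {a..b}"
    hence y: "a \<le> y" "y \<le> b" by auto
    have "\<forall>a\<in>I. \<forall>b\<in>I. \<forall>x. a \<le> x \<and> x \<le> b \<longrightarrow> x \<in> I"
      using I by (simp only: is_interval_1)
    thus "y \<in> I" using aI(1,2) y by blast
  qed
  obtain m where m: "m \<in> {a..b}" "\<And>y. y \<in> {a..b} \<Longrightarrow> L y \<le> L m"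
  proof -
    have "\<exists>x\<in>{a..b}. \<forall>y\<in>{a..b}. L y \<le> L x"
      by (rule continuous_attains_sup) (use continuous_on_subset[OF L sub] aI(3) in auto)
    thus ?thesis using that by blast
  qed
  define C where "C = max (L m) 0"
  have C: "\<And>y. y \<in> {a..b} \<Longrightarrow> \<bar>E' y\<bar> \<le> C * E y"
  proof -
    fix y assume y: "y \<in> {a..b}"
    hence "y \<in> I" using sub by auto
    hence "\<bar>E' y\<bar> \<le> L y * E y" "E y \<ge> 0" using bd pos by auto
    moreover have "L y \<le> C" using m(2)[OF y] unfolding C_def by simp
    moreover have "L y * E y \<le> C * E y" using mult_right_mono calculation by blast
    ultimately show "\<bar>E' y\<bar> \<le> C * E y" by linarith
  qed
  have Et: "E t \<ge> 0" using pos t by simp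
  show ?thesis
  proof (cases "t0 \<le> t")
    case True
    hence ab: "a = t0" "b = t" unfolding a_def b_def by auto
    have "E t * exp (- C * t) \<le> E t0 * exp (- C * t0)"
    proof (rule DERIV_nonpos_imp_nonincreasing[OF True, of "\<lambda>s. E s * exp (- C * s)"])
      fix x assume x: "t0 \<le> x" "x \<le> t"
      hence xI: "x \<in> {a..b}" using ab by auto
      hence "x \<in> I" using sub by auto
      have "((\<lambda>s. E s * exp (- C * s)) has_real_derivative
             (E' x * exp (- C * x) + E x * (exp (- C * x) * (- C)))) (at x)"
        by (auto intro!: derivative_eq_intros der[OF \<open>x \<in> I\<close>])
      moreover have "E' x * exp (- C * x) + E x * (exp (- C * x) * (- C)) \<le> 0"
      proof -
        have "E' x - C * E x \<le> 0" using C[OF xI] by simp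
        hence "(E' x - C * E x) * exp (- C * x) \<le> 0"
          by (simp add: mult_nonpos_nonneg)
        thus ?thesis by (simp add: algebra_simps)
      qed
      ultimately show "\<exists>y. ((\<lambda>s. E s * exp (- C * s)) has_real_derivative y) (at x) \<and> y \<le> 0"
        by blast
    qed
    hence "E t * exp (- C * t) \<le> 0" using E0 by simp
    hence "E t \<le> 0" by (simp add: mult_le_0_iff)
    thus ?thesis using Et by simp
  next
    case False
    hence le: "t \<le> t0" by simp
    hence ab: "a = t" "b = t0" unfolding a_def b_def by auto
    have "E t * exp (C * t) \<le> E t0 * exp (C * t0)"
    proof (rule DERIV_nonneg_imp_nondecreasing[OF le, of "\<lambda>s. E s * exp (C * s)"])
      fix x assume x: "t \<le> x" "x \<le> t0"
      hence xI: "x \<in> {a..b}" using ab by auto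
      hence "x \<in> I" using sub by auto
      have "((\<lambda>s. E s * exp (C * s)) has_real_derivative
             (E' x * exp (C * x) + E x * (exp (C * x) * C))) (at x)"
        by (auto intro!: derivative_eq_intros der[OF \<open>x \<in> I\<close>])
      moreover have "E' x * exp (C * x) + E x * (exp (C * x) * C) \<ge> 0"
      proof -
        have "E' x + C * E x \<ge> 0" using C[OF xI] by simp
        hence "(E' x + C * E x) * exp (C * x) \<ge> 0"
          by simp
        thus ?thesis by (simp add: algebra_simps)
      qed
      ultimately show "\<exists>y. ((\<lambda>s. E s * exp (C * s)) has_real_derivative y) (at x) \<and> y \<ge> 0"
        by blast
    qed
    hence "E t * exp (C * t) \<le> 0" using E0 by simp
    hence "E t \<le> 0" by (simp add: mult_le_0_iff)
    thus ?thesis using Et by simp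
  qed
qed

lemma ab_bound:
  fixes a b A B :: real
  assumes "A \<ge> 0" "B \<ge> 0"
  shows "\<bar>a*b*(A - B)\<bar> \<le> (A/2 + B/2) * (a^2 + b^2)"
proof -
  have "\<bar>a*b*(A - B)\<bar> = \<bar>a*b\<bar> * \<bar>A - B\<bar>" by (simp add: abs_mult)
  also have "\<dots> \<le> \<bar>a*b\<bar> * (A + B)" using assms by (intro mult_left_mono) auto
  also have "\<dots> \<le> ((a^2+b^2)/2) * (A + B)"
  proof (rule mult_right_mono)
    have "0 \<le> (\<bar>a\<bar> - \<bar>b\<bar>)^2" by simp
    thus "\<bar>a*b\<bar> \<le> (a^2+b^2)/2" by (simp add: power2_eq_square abs_mult algebra_simps)
  qed (use assms in auto)
  finally show ?thesis by (simp add: algebra_simps)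
qed

lemma part1:
  assumes sol: "KH_solution I q p" and t0: "t0 \<in> I" and M0: "inM (q t0) (p t0)" and t: "t \<in> I"
  shows "inM (q t) (p t)"
proof -
  have I: "is_interval I" using sol unfolding KH_solution_def by blast
  have S: "\<And>s. s \<in> I \<Longrightarrow> Sf (q s) > 0" using sol Sf_pos unfolding KH_solution_def by blast
  note od = ode[OF sol]
  define pth where "pth s = q s$1 * p s$2 - q s$2 * p s$1" for s
  have dpth: "(pth has_real_derivative 0) (at s)" if s: "s \<in> I" for s
    unfolding pth_def
    by (auto intro!: derivative_eq_intros od[OF s] simp: dH1_def dH2_def dQ1_def dQ2_def algebra_simps add_divide_distrib diff_divide_distrib)
  have pth0: "pth s = 0" if s: "s \<in> I" for s
    using const_deriv0[OF I dpth t0 s] M0 unfolding pth_def inM_def by simp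
  define E where "E s = (q s$3)^2 + (p s$3)^2" for s
  define E' where "E' s = 2 * q s$3 * dH3 (q s) (p s) + 2 * p s$3 * (- dQ3 (q s))" for s
  define L where "L s = ((q s$1)^2 + (q s$2)^2)/4 + 2/(pi * sqrt (Sf (q s))^3)" for s
  have dE: "(E has_real_derivative E' s) (at s)" if s: "s \<in> I" for s
    unfolding E_def E'_def
    by (auto intro!: derivative_eq_intros od[OF s])
  have bd: "\<bar>E' s\<bar> \<le> L s * E s" if s: "s \<in> I" for s
  proof -
    have h3: "dH3 (q s) (p s) = ((q s$1)^2 + (q s$2)^2) * p s$3 / 4"
      using pth0[OF s] unfolding dH3_def dH1_def dH2_def pth_def
      by (simp add: algebra_simps power2_eq_square)
    have "E' s = q s$3 * p s$3 * (((q s$1)^2 + (q s$2)^2)/2 - 4/(pi * sqrt (Sf (q s))^3))"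
      unfolding E'_def h3 dQ3_def by (simp add: algebra_simps)
    moreover have "L s = (((q s$1)^2 + (q s$2)^2)/2)/2 + (4/(pi * sqrt (Sf (q s))^3))/2"
      unfolding L_def by simp
    moreover have "4/(pi * sqrt (Sf (q s))^3) \<ge> 0" using S[OF s] by simp
    ultimately show ?thesis unfolding E_def
      using ab_bound[of "((q s$1)^2 + (q s$2)^2)/2" "4/(pi * sqrt (Sf (q s))^3)" "q s$3" "p s$3"]
      by simp
  qed
  have Lc: "continuous_on I L"
  proof (rule continuous_at_imp_continuous_on, rule ballI)
    fix s assume s: "s \<in> I"
    have c: "isCont (\<lambda>s. q s $ i) s" for i
    proof -
      have "\<exists>D. ((\<lambda>s. q s $ i) has_real_derivative D) (at s)"
        using od(1-3)[OF s] by (metis exhaust_3)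
      thus ?thesis using DERIV_isCont by blast
    qed
    have "pi * sqrt (Sf (q s))^3 \<noteq> 0" using S[OF s] by simp
    thus "isCont L s" unfolding L_def Sf_def
      by (intro continuous_intros c) auto
  qed
  have E0: "E t0 = 0" using M0 unfolding E_def inM_def by simp
  have "E t = 0"
    by (rule gron[OF I t0 t E0 _ dE bd Lc]) (auto simp: E_def)
  hence "q t$3 = 0 \<and> p t$3 = 0" unfolding E_def
    by (smt (verit) power_eq_0_iff zero_le_power2)
  thus ?thesis using pth0[OF t] unfolding inM_def pth_def by simp
qed


lemma part2:
  assumes sol: "KH_solution I q p" and allM: "\<forall>t\<in>I. inM (q t) (p t)" and t0: "t0 \<in> I"
    and h: "KH (q t0) (p t0) = h"
  shows "\<exists>b c. (\<forall>s\<in>I. (q s$1)^2 + (q s$2)^2 = 2*h* s^2 + b* s + c) \<and> b^2 - 8*h*c = 1/pi"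
proof -
  have I: "is_interval I" using sol unfolding KH_solution_def by blast
  have S: "\<And>s. s \<in> I \<Longrightarrow> Sf (q s) > 0" using sol Sf_pos unfolding KH_solution_def by blast
  note od = ode[OF sol]
  define u where "u s = (q s$1)^2 + (q s$2)^2" for s
  have M: "q s$3 = 0" "p s$3 = 0" "q s$1 * p s$2 - q s$2 * p s$1 = 0" if "s \<in> I" for s
    using allM that unfolding inM_def by auto
  have upos: "u s > 0" if s: "s \<in> I" for s
  proof -
    have "Sf (q s) = (u s)^2" using M(1)[OF s] unfolding Sf_def u_def by simp
    hence "(u s)^2 > 0" using S[OF s] by simp
    moreover have "u s \<ge> 0" unfolding u_def by simp
    ultimately show ?thesis by (cases "u s = 0") auto
  qed
  have sq: "sqrt (Sf (q s)) = u s" if s: "s \<in> I" for s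
  proof -
    have "Sf (q s) = (u s)^2" using M(1)[OF s] unfolding Sf_def u_def by simp
    thus ?thesis using upos[OF s] by simp
  qed
  have dx: "((\<lambda>s. q s$1) has_real_derivative p s$1) (at s)" if s: "s \<in> I" for s
    using od(1)[OF s] M(2)[OF s] by (simp add: dH1_def)
  have dy: "((\<lambda>s. q s$2) has_real_derivative p s$2) (at s)" if s: "s \<in> I" for s
    using od(2)[OF s] M(2)[OF s] by (simp add: dH2_def)
  have dpx: "((\<lambda>s. p s$1) has_real_derivative - (q s$1 / (4*pi*(u s)^2))) (at s)" if s: "s \<in> I" for s
  proof -
    have "dQ1 (q s) (p s) = q s$1 / (4*pi*(u s)^2)"
      unfolding dQ1_def sq[OF s] using M(2)[OF s] upos[OF s]
      apply (simp add: u_def[symmetric] power2_eq_square power3_eq_cube field_simps)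
      apply (simp add: u_def algebra_simps power2_eq_square)?
      done
    thus ?thesis using od(4)[OF s] by simp
  qed
  have dpy: "((\<lambda>s. p s$2) has_real_derivative - (q s$2 / (4*pi*(u s)^2))) (at s)" if s: "s \<in> I" for s
  proof -
    have "dQ2 (q s) (p s) = q s$2 / (4*pi*(u s)^2)"
      unfolding dQ2_def sq[OF s] using M(2)[OF s] upos[OF s]
      apply (simp add: u_def[symmetric] power2_eq_square power3_eq_cube field_simps)
      apply (simp add: u_def algebra_simps power2_eq_square)?
      done
    thus ?thesis using od(5)[OF s] by simp
  qed
  define e where "e s = ((p s$1)^2 + (p s$2)^2)/2 - 1/(8*pi*u s)" for s
  have KHe: "KH (q s) (p s) = e s" if s: "s \<in> I" for s
    using sq[OF s] M(1,2)[OF s] unfolding KH_def e_def Sf_def Let_def u_def by simp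
  have du0: "(u has_real_derivative (2*q s$1*p s$1 + 2*q s$2*p s$2)) (at s)" if s: "s \<in> I" for s
    unfolding u_def[abs_def]
    by (auto intro!: derivative_eq_intros dx[OF s] dy[OF s])
  have de: "(e has_real_derivative 0) (at s)" if s: "s \<in> I" for s
  proof -
    have "u s \<noteq> 0" using upos[OF s] by simp
    hence "(e has_real_derivative
      (p s$1 * (- (q s$1 / (4*pi*(u s)^2))) + p s$2 * (- (q s$2 / (4*pi*(u s)^2)))
        + (2*q s$1*p s$1 + 2*q s$2*p s$2)/(8*pi*(u s)^2))) (at s)"
      unfolding e_def[abs_def]
      apply (auto intro!: derivative_eq_intros dx[OF s] dy[OF s] dpx[OF s] dpy[OF s] du0[OF s])
      apply (simp_all add: field_simps power2_eq_square)
      done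
    moreover have "p s$1 * (- (q s$1 / (4*pi*(u s)^2))) + p s$2 * (- (q s$2 / (4*pi*(u s)^2)))
        + (2*q s$1*p s$1 + 2*q s$2*p s$2)/(8*pi*(u s)^2) = 0"
      using \<open>u s \<noteq> 0\<close> by (simp add: field_simps)
    ultimately show ?thesis by simp
  qed
  have econst: "e s = h" if s: "s \<in> I" for s
    using const_deriv0[OF I de t0 s] KHe[OF t0] h by simp
  define w where "w s = 2*(q s$1 * p s$1 + q s$2 * p s$2)" for s
  have dw: "((\<lambda>s. w s - 4*h* s) has_real_derivative 0) (at s)" if s: "s \<in> I" for s
  proof -
    have "u s \<noteq> 0" using upos[OF s] by simp
    have "((\<lambda>s. w s - 4*h* s) has_real_derivative
       2*(p s$1 * p s$1 + q s$1 * (- (q s$1 / (4*pi*(u s)^2))) + (p s$2 * p s$2 + q s$2 * (- (q s$2 / (4*pi*(u s)^2))))) - 4*h) (at s)"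
      unfolding w_def
      by (auto intro!: derivative_eq_intros dx[OF s] dy[OF s] dpx[OF s] dpy[OF s])
    moreover have "2*(p s$1 * p s$1 + q s$1 * (- (q s$1 / (4*pi*(u s)^2))) + (p s$2 * p s$2 + q s$2 * (- (q s$2 / (4*pi*(u s)^2))))) - 4*h = 0"
    proof -
      have hh: "h = ((p s$1)^2 + (p s$2)^2)/2 - 1/(8*pi*u s)" using econst[OF s] unfolding e_def by simp
      have uu: "q s$1 * q s$1 + q s$2 * q s$2 = u s" unfolding u_def by (simp add: power2_eq_square)
      have "2*(p s$1 * p s$1 + q s$1 * (- (q s$1 / (4*pi*(u s)^2))) + (p s$2 * p s$2 + q s$2 * (- (q s$2 / (4*pi*(u s)^2))))) - 4*h
        = 2*(p s$1 * p s$1 + p s$2 * p s$2) - 2*(q s$1 * q s$1 + q s$2 * q s$2)/(4*pi*(u s)^2) - 4*h"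
        by (simp add: algebra_simps add_divide_distrib)
      also have "\<dots> = 2*(p s$1 * p s$1 + p s$2 * p s$2) - 2*(u s)/(4*pi*(u s)^2) - 4*h" unfolding uu ..
      also have "\<dots> = 0" unfolding hh using \<open>u s \<noteq> 0\<close>
        by (simp add: field_simps power2_eq_square)
      finally show ?thesis .
    qed
    ultimately show ?thesis by simp
  qed
  define b where "b = w t0 - 4*h*t0"
  have wb: "w s = 4*h* s + b" if s: "s \<in> I" for s
    using const_deriv0[OF I dw t0 s] unfolding b_def by simp
  have du: "((\<lambda>s. u s - 2*h* s^2 - b* s) has_real_derivative 0) (at s)" if s: "s \<in> I" for s
  proof -
    have "((\<lambda>s. u s - 2*h* s^2 - b* s) has_real_derivative
       (2*(q s$1 * p s$1 + q s$2 * p s$2) - 4*h* s - b)) (at s)"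
      unfolding u_def
      by (auto intro!: derivative_eq_intros dx[OF s] dy[OF s] simp: algebra_simps)
    thus ?thesis using wb[OF s] unfolding w_def by simp
  qed
  define c where "c = u t0 - 2*h*t0^2 - b*t0"
  have uc: "u s = 2*h* s^2 + b* s + c" if s: "s \<in> I" for s
    using const_deriv0[OF I du t0 s] unfolding c_def by simp
  have inv: "b^2 - 8*h*c = 1/pi"
  proof -
    have 1: "b^2 - 8*h*c = (w t0)^2 - 8*h*u t0" unfolding b_def c_def by (simp add: algebra_simps power2_eq_square)
    have hh: "h = ((p t0$1)^2 + (p t0$2)^2)/2 - 1/(8*pi*u t0)" using econst[OF t0] unfolding e_def by simp
    have ww: "(w t0)^2 = 4 * u t0 * ((p t0$1)^2 + (p t0$2)^2) - 4 * (q t0$1 * p t0$2 - q t0$2 * p t0$1)^2"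
      unfolding w_def u_def by (simp add: algebra_simps power2_eq_square)
    have "(w t0)^2 - 8*h*u t0 = 1/pi"
      unfolding ww M(3)[OF t0] hh using upos[OF t0] by (simp add: field_simps)
    thus ?thesis using 1 by simp
  qed
  show ?thesis using uc inv unfolding u_def by blast
qed


lemma conic_part:
  assumes sol: "KH_solution I q p" and allM: "\<forall>t\<in>I. inM (q t) (p t)" and t0: "t0 \<in> I"
    and h: "KH (q t0) (p t0) = h"
  shows "let G = (\<lambda>t. (t, sqrt ((q t $ 1)^2 + (q t $ 2)^2))) ` I in
              (h > 0 \<longrightarrow> lies_on_hyperbola G) \<and>
              (h < 0 \<longrightarrow> lies_on_ellipse G) \<and>
              (h = 0 \<longrightarrow> lies_on_parabola G)"
proof -
  obtain b c where uc: "\<forall>s\<in>I. (q s$1)^2 + (q s$2)^2 = 2*h * s^2 + b * s + c" and inv: "b^2 - 8*h*c = 1/pi"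
    using part2[OF sol allM t0 h] by blast
  define G where "G = (\<lambda>t. (t, sqrt ((q t $ 1)^2 + (q t $ 2)^2))) ` I"
  have sub: "G \<subseteq> conic_set (-2*h) 0 1 (-b) 0 (-c)"
  proof
    fix z assume "z \<in> G"
    then obtain s where s: "s \<in> I" "z = (s, sqrt ((q s $ 1)^2 + (q s $ 2)^2))" unfolding G_def by blast
    define r where "r = sqrt ((q s $ 1)^2 + (q s $ 2)^2)"
    have "r^2 = (q s $ 1)^2 + (q s $ 2)^2" unfolding r_def by simp
    hence r2: "r^2 = 2*h * s^2 + b * s + c" using uc s(1) by simp
    have "z = (s, r)" using s(2) r_def by simp
    thus "z \<in> conic_set (-2*h) 0 1 (-b) 0 (-c)" unfolding conic_set_def using r2 by simp
  qed
  have det: "conic_det (-2*h) 0 1 (-b) 0 (-c) \<noteq> 0"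
  proof -
    have "conic_det (-2*h) 0 1 (-b) 0 (-c) = - (b^2 - 8*h*c)/4"
      unfolding conic_det_def by (simp add: algebra_simps power2_eq_square)
    thus ?thesis using inv by simp
  qed
  have ne: "conic_set (-2*h) 0 1 (-b) 0 (-c) \<noteq> {}" using sub t0 unfolding G_def by blast
  have "(h > 0 \<longrightarrow> lies_on_hyperbola G) \<and> (h < 0 \<longrightarrow> lies_on_ellipse G) \<and> (h = 0 \<longrightarrow> lies_on_parabola G)"
  proof (intro conjI impI)
    assume "h > 0"
    hence "is_hyperbola (-2*h) 0 1 (-b) 0 (-c)" using det unfolding is_hyperbola_def by simp
    thus "lies_on_hyperbola G" using sub unfolding lies_on_hyperbola_def by blast
  next
    assume "h < 0"
    hence "is_ellipse (-2*h) 0 1 (-b) 0 (-c)" using det ne unfolding is_ellipse_def by simp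
    thus "lies_on_ellipse G" using sub unfolding lies_on_ellipse_def by blast
  next
    assume "h = 0"
    hence "is_parabola (-2*h) 0 1 (-b) 0 (-c)" using det unfolding is_parabola_def by simp
    thus "lies_on_parabola G" using sub unfolding lies_on_parabola_def by blast
  qed
  thus ?thesis unfolding G_def Let_def by simp
qed

theorem mainTheorem5:
  shows "(\<forall>I q p t0. KH_solution I q p \<and> t0 \<in> I \<and> inM (q t0) (p t0) \<longrightarrow>
            (\<forall>t\<in>I. inM (q t) (p t)))
       \<and> (\<forall>I q p t0 (h::real). KH_solution I q p \<and> (\<forall>t\<in>I. inM (q t) (p t)) \<and>
            t0 \<in> I \<and> KH (q t0) (p t0) = h \<longrightarrow>
            (let G = (\<lambda>t. (t, sqrt ((q t $ 1)^2 + (q t $ 2)^2))) ` I in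
              (h > 0 \<longrightarrow> lies_on_hyperbola G) \<and>
              (h < 0 \<longrightarrow> lies_on_ellipse G) \<and>
              (h = 0 \<longrightarrow> lies_on_parabola G)))"
  using part1 conic_part by blast

end
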